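(* Let $(L,[\cdot,\cdot],\cdot,\alpha)$ be a multiplicative Hom-post-Lie algebra, let $(M_i,\diamond_i,\bullet_i,\alpha_{M_i})$, $i=1,2$, be two modules over $L$, and let $k$ be a non-negative integer. On $M_1\otimes M_2$ define $\alpha_M(m_1\otimes m_2)=\alpha_{M_1}(m_1)\otimes\alpha_{M_2}(m_2)$, $x\diamond(m_1\otimes m_2)=(\alpha^k(x)\diamond_1 m_1)\otimes\alpha_{M_2}(m_2)+\alpha_{M_1}(m_1)\otimes(\alpha^k(x)\diamond_2 m_2)$, $x\bullet(m_1\otimes m_2)=(\alpha^k(x)\bullet_1 m_1)\otimes\alpha_{M_2}(m_2)+\alpha_{M_1}(m_1)\otimes(\alpha^k(x)\bullet_2 m_2)$. Then $(M_1\otimes M_2,\diamond,\bullet,\alpha_M)$ is a module over $L$.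
   Context: All vector spaces are over a field $\mathbb{K}$ of characteristic $\neq 2$. A Hom-Lie algebra is $(L,[\cdot,\cdot],\alpha)$ with $[\cdot,\cdot]$ bilinear skew-symmetric, $\alpha$ linear, and $[\alpha(x),[y,z]]+[\alpha(y),[z,x]]+[\alpha(z),[x,y]]=0$. A Hom-post-Lie algebra $(L,[\cdot,\cdot],\cdot,\alpha)$ is a Hom-Lie algebra with bilinear $\cdot$ such that $\alpha(z)\cdot[x,y]-[z\cdot x,\alpha(y)]-[\alpha(x),z\cdot y]=0$ and $\alpha(z)\cdot(y\cdot x)-\alpha(y)\cdot(z\cdot x)+(y\cdot z)\cdot\alpha(x)-(z\cdot y)\cdot\alpha(x)+[y,z]\cdot\alpha(x)=0$ for all $x,y,z$; it is multiplicative if $\alpha([x,y])=[\alpha(x),\alpha(y)]$ and $\alpha(x\cdot y)=\alpha(x)\cdot\alpha(y)$. A module over $L$ is a vector space $M$ with linear $\alpha_M$ and bilinear $\diamond,\bullet:L\otimes M\to M$ such that for all $x,y\in L,m\in M$: (i) $\alpha_M(x\diamond m)=\alpha(x)\diamond\alpha_M(m)$, $\alpha_M(x\bullet m)=\alpha(x)\bullet\alpha_M(m)$; (ii) $[x,y]\diamond\alpha_M(m)=\alpha(x)\diamond(y\diamond m)-\alpha(y)\diamond(x\diamond m)$; (iii) $(x\cdot y)\diamond\alpha_M(m)=\alpha(x)\bullet(y\diamond m)-\alpha(y)\diamond(x\bullet m)$; (iv) $[x,y]\bullet\alpha_M(m)=\alpha(x)\bullet(y\bullet m)-\alpha(y)\bullet(x\bullet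 m)-(x\cdot y)\bullet\alpha_M(m)+(y\cdot x)\bullet\alpha_M(m)$. *)

theory Defs
  imports Main HOL.Vector_Spaces
begin

definition bilin :: "('k::field \<Rightarrow> 'a::ab_group_add \<Rightarrow> 'a) \<Rightarrow> ('k \<Rightarrow> 'b::ab_group_add \<Rightarrow> 'b)
    \<Rightarrow> ('k \<Rightarrow> 'c::ab_group_add \<Rightarrow> 'c) \<Rightarrow> ('a \<Rightarrow> 'b \<Rightarrow> 'c) \<Rightarrow> bool" where
  "bilin s1 s2 s3 f \<longleftrightarrow>
     (\<forall>x. Vector_Spaces.linear s2 s3 (f x)) \<and> (\<forall>y. Vector_Spaces.linear s1 s3 (\<lambda>x. f x y))"

definition hom_lie_algebra ::
  "('k::field \<Rightarrow> 'l::ab_group_add \<Rightarrow> 'l) \<Rightarrow> ('l \<Rightarrow> 'l \<Rightarrow> 'l) \<Rightarrow> ('l \<Rightarrow> 'l) \<Rightarrow> bool" where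
  "hom_lie_algebra sL br \<alpha> \<longleftrightarrow>
     vector_space sL \<and> bilin sL sL sL br \<and> (\<forall>x y. br x y = - br y x) \<and>
     Vector_Spaces.linear sL sL \<alpha> \<and>
     (\<forall>x y z. br (\<alpha> x) (br y z) + br (\<alpha> y) (br z x) + br (\<alpha> z) (br x y) = 0)"

definition hom_post_lie_algebra ::
  "('k::field \<Rightarrow> 'l::ab_group_add \<Rightarrow> 'l) \<Rightarrow> ('l \<Rightarrow> 'l \<Rightarrow> 'l) \<Rightarrow> ('l \<Rightarrow> 'l \<Rightarrow> 'l) \<Rightarrow> ('l \<Rightarrow> 'l) \<Rightarrow> bool" where
  "hom_post_lie_algebra sL br dot \<alpha> \<longleftrightarrow>
     hom_lie_algebra sL br \<alpha> \<and> bilin sL sL sL dot \<and>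
     (\<forall>x y z. dot (\<alpha> z) (br x y) - br (dot z x) (\<alpha> y) - br (\<alpha> x) (dot z y) = 0) \<and>
     (\<forall>x y z. dot (\<alpha> z) (dot y x) - dot (\<alpha> y) (dot z x) + dot (dot y z) (\<alpha> x)
               - dot (dot z y) (\<alpha> x) + dot (br y z) (\<alpha> x) = 0)"

definition multiplicative ::
  "('l \<Rightarrow> 'l \<Rightarrow> 'l) \<Rightarrow> ('l \<Rightarrow> 'l \<Rightarrow> 'l) \<Rightarrow> ('l \<Rightarrow> 'l) \<Rightarrow> bool" where
  "multiplicative br dot \<alpha> \<longleftrightarrow>
     (\<forall>x y. \<alpha> (br x y) = br (\<alpha> x) (\<alpha> y)) \<and> (\<forall>x y. \<alpha> (dot x y) = dot (\<alpha> x) (\<alpha> y))"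

definition hpl_module ::
  "('k::field \<Rightarrow> 'l::ab_group_add \<Rightarrow> 'l) \<Rightarrow> ('l \<Rightarrow> 'l \<Rightarrow> 'l) \<Rightarrow> ('l \<Rightarrow> 'l \<Rightarrow> 'l) \<Rightarrow> ('l \<Rightarrow> 'l)
    \<Rightarrow> ('k \<Rightarrow> 'm::ab_group_add \<Rightarrow> 'm) \<Rightarrow> ('l \<Rightarrow> 'm \<Rightarrow> 'm) \<Rightarrow> ('l \<Rightarrow> 'm \<Rightarrow> 'm) \<Rightarrow> ('m \<Rightarrow> 'm) \<Rightarrow> bool" where
  "hpl_module sL br dot \<alpha> sM dm bm \<alpha>M \<longleftrightarrow>
     vector_space sM \<and> Vector_Spaces.linear sM sM \<alpha>M \<and>
     bilin sL sM sM dm \<and> bilin sL sM sM bm \<and>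
     (\<forall>x m. \<alpha>M (dm x m) = dm (\<alpha> x) (\<alpha>M m)) \<and>
     (\<forall>x m. \<alpha>M (bm x m) = bm (\<alpha> x) (\<alpha>M m)) \<and>
     (\<forall>x y m. dm (br x y) (\<alpha>M m) = dm (\<alpha> x) (dm y m) - dm (\<alpha> y) (dm x m)) \<and>
     (\<forall>x y m. dm (dot x y) (\<alpha>M m) = bm (\<alpha> x) (dm y m) - dm (\<alpha> y) (bm x m)) \<and>
     (\<forall>x y m. bm (br x y) (\<alpha>M m) = bm (\<alpha> x) (bm y m) - bm (\<alpha> y) (bm x m)
                 - bm (dot x y) (\<alpha>M m) + bm (dot y x) (\<alpha>M m))"

(* Over a field this is equivalent to the
   usual universal property. *)
definition is_tensor_product ::
  "('k::field \<Rightarrow> 'a::ab_group_add \<Rightarrow> 'a) \<Rightarrow> ('k \<Rightarrow> 'b::ab_group_add \<Rightarrow> 'b)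
    \<Rightarrow> ('k \<Rightarrow> 't::ab_group_add \<Rightarrow> 't) \<Rightarrow> ('a \<Rightarrow> 'b \<Rightarrow> 't) \<Rightarrow> bool" where
  "is_tensor_product s1 s2 sT tp \<longleftrightarrow>
     vector_space s1 \<and> vector_space s2 \<and> vector_space sT \<and>
     bilin s1 s2 sT tp \<and>
     module.span sT (range (\<lambda>(a, b). tp a b)) = UNIV \<and>
     (\<forall>f. bilin s1 s2 (*) f \<longrightarrow>
        (\<exists>g. Vector_Spaces.linear sT (*) g \<and> (\<forall>a b. g (tp a b) = f a b)))"

end

theory Submission
  imports Defs
begin

lemma lin_add: "Vector_Spaces.linear s t f \<Longrightarrow> f (a + b) = f a + f b"
  by (simp add: linear_iff)

lemma lin_diff: "Vector_Spaces.linear s t f \<Longrightarrow> f (a - b) = f a - f b"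
proof -
  assume l: "Vector_Spaces.linear s t f"
  have "f (a - b) + f b = f a" using lin_add[OF l, of "a - b" b] by simp
  thus ?thesis by (simp add: algebra_simps)
qed

lemma lin_comp: "Vector_Spaces.linear s s f \<Longrightarrow> Vector_Spaces.linear s s g \<Longrightarrow> Vector_Spaces.linear s s (\<lambda>m. f (g m))"
  using Vector_Spaces.linear_compose[of s s g s f] by (simp add: o_def)

lemma lin_sub: "Vector_Spaces.linear s s f \<Longrightarrow> Vector_Spaces.linear s s g \<Longrightarrow> Vector_Spaces.linear s s (\<lambda>m. f m - g m)"
proof -
  assume f: "Vector_Spaces.linear s s f" and g: "Vector_Spaces.linear s s g"
  interpret vector_space_pair s s using f by (simp add: linear_iff vector_space_pair_def)
  show ?thesis by (rule linear_compose_sub[OF f g])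
qed

lemma lin_plus: "Vector_Spaces.linear s s f \<Longrightarrow> Vector_Spaces.linear s s g \<Longrightarrow> Vector_Spaces.linear s s (\<lambda>m. f m + g m)"
proof -
  assume f: "Vector_Spaces.linear s s f" and g: "Vector_Spaces.linear s s g"
  interpret vector_space_pair s s using f by (simp add: linear_iff vector_space_pair_def)
  show ?thesis by (rule linear_compose_add[OF f g])
qed

lemma ext_tp:
  assumes T: "is_tensor_product s1 s2 sT tp"
    and f: "Vector_Spaces.linear sT sT f" and g: "Vector_Spaces.linear sT sT g"
    and eq: "\<And>a b. f (tp a b) = g (tp a b)"
  shows "f m = g m"
proof -
  have vs: "vector_space sT" using T unfolding is_tensor_product_def by auto
  have sp: "module.span sT (range (\<lambda>(a, b). tp a b)) = UNIV" using T unfolding is_tensor_product_def by auto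
  interpret vector_space_pair sT sT by (simp add: vector_space_pair_def vs)
  show ?thesis
    by (rule linear_eq_on_span[OF f g, of "range (\<lambda>(a, b). tp a b)"]) (auto simp: eq sp)
qed

lemma funpow_comm: "(f ^^ k) (f x) = f ((f ^^ k) x)"
  by (induct k) auto

lemma funpow_mult: "(\<forall>x y. f (br x y) = br (f x) (f y)) \<Longrightarrow> (f ^^ k) (br x y) = br ((f ^^ k) x) ((f ^^ k) y)"
  by (induct k) auto

theorem mainTheorem3:
  fixes sL :: "'k::field \<Rightarrow> 'l::ab_group_add \<Rightarrow> 'l"
    and br dot :: "'l \<Rightarrow> 'l \<Rightarrow> 'l" and \<alpha> :: "'l \<Rightarrow> 'l"
    and s1 :: "'k \<Rightarrow> 'm1::ab_group_add \<Rightarrow> 'm1"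
    and d1 b1 :: "'l \<Rightarrow> 'm1 \<Rightarrow> 'm1" and \<alpha>1 :: "'m1 \<Rightarrow> 'm1"
    and s2 :: "'k \<Rightarrow> 'm2::ab_group_add \<Rightarrow> 'm2"
    and d2 b2 :: "'l \<Rightarrow> 'm2 \<Rightarrow> 'm2" and \<alpha>2 :: "'m2 \<Rightarrow> 'm2"
    and sT :: "'k \<Rightarrow> 't::ab_group_add \<Rightarrow> 't" and tp :: "'m1 \<Rightarrow> 'm2 \<Rightarrow> 't"
    and \<alpha>M :: "'t \<Rightarrow> 't" and dM bM :: "'l \<Rightarrow> 't \<Rightarrow> 't"
    and k :: nat
  assumes char: "(2::'k) \<noteq> 0"
    and L: "hom_post_lie_algebra sL br dot \<alpha>"
    and mult: "multiplicative br dot \<alpha>"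
    and M1: "hpl_module sL br dot \<alpha> s1 d1 b1 \<alpha>1"
    and M2: "hpl_module sL br dot \<alpha> s2 d2 b2 \<alpha>2"
    and T: "is_tensor_product s1 s2 sT tp"
    and \<alpha>M_lin: "Vector_Spaces.linear sT sT \<alpha>M"
    and \<alpha>M_def: "\<And>m1 m2. \<alpha>M (tp m1 m2) = tp (\<alpha>1 m1) (\<alpha>2 m2)"
    and dM_bilin: "bilin sL sT sT dM"
    and dM_def: "\<And>x m1 m2. dM x (tp m1 m2) =
                   tp (d1 ((\<alpha> ^^ k) x) m1) (\<alpha>2 m2) + tp (\<alpha>1 m1) (d2 ((\<alpha> ^^ k) x) m2)"
    and bM_bilin: "bilin sL sT sT bM"
    and bM_def: "\<And>x m1 m2. bM x (tp m1 m2) =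
                   tp (b1 ((\<alpha> ^^ k) x) m1) (\<alpha>2 m2) + tp (\<alpha>1 m1) (b2 ((\<alpha> ^^ k) x) m2)"
  shows "hpl_module sL br dot \<alpha> sT dM bM \<alpha>M"
proof -
  have vT: "vector_space sT" using T unfolding is_tensor_product_def by auto
  have tpl: "\<And>a. Vector_Spaces.linear s2 sT (tp a)" and tpr: "\<And>b. Vector_Spaces.linear s1 sT (\<lambda>a. tp a b)"
    using T unfolding is_tensor_product_def bilin_def by auto
  have tp_add1: "\<And>a b c. tp (a + b) c = tp a c + tp b c" using lin_add[OF tpr] by blast
  have tp_diff1: "\<And>a b c. tp (a - b) c = tp a c - tp b c" using lin_diff[OF tpr] by blast
  have tp_add2: "\<And>a b c. tp a (b + c) = tp a b + tp a c" using lin_add[OF tpl] by blast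
  have tp_diff2: "\<And>a b c. tp a (b - c) = tp a b - tp a c" using lin_diff[OF tpl] by blast
  have dl: "\<And>x. Vector_Spaces.linear sT sT (dM x)" using dM_bilin unfolding bilin_def by auto
  have bl: "\<And>x. Vector_Spaces.linear sT sT (bM x)" using bM_bilin unfolding bilin_def by auto
  have dM_add: "\<And>x a b. dM x (a + b) = dM x a + dM x b" using lin_add[OF dl] by blast
  have bM_add: "\<And>x a b. bM x (a + b) = bM x a + bM x b" using lin_add[OF bl] by blast
  have aM_add: "\<And>a b. \<alpha>M (a + b) = \<alpha>M a + \<alpha>M b" using lin_add[OF \<alpha>M_lin] by blast
  have mbr: "\<And>x y. (\<alpha> ^^ k) (br x y) = br ((\<alpha> ^^ k) x) ((\<alpha> ^^ k) y)"
    by (rule funpow_mult) (use mult in \<open>auto simp: multiplicative_def\<close>)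
  have mdot: "\<And>x y. (\<alpha> ^^ k) (dot x y) = dot ((\<alpha> ^^ k) x) ((\<alpha> ^^ k) y)"
    by (rule funpow_mult) (use mult in \<open>auto simp: multiplicative_def\<close>)
  note m1 = M1[unfolded hpl_module_def] and m2 = M2[unfolded hpl_module_def]
  have a1d: "\<And>x m. \<alpha>1 (d1 x m) = d1 (\<alpha> x) (\<alpha>1 m)" and a1b: "\<And>x m. \<alpha>1 (b1 x m) = b1 (\<alpha> x) (\<alpha>1 m)"
   and d1br: "\<And>x y m. d1 (br x y) (\<alpha>1 m) = d1 (\<alpha> x) (d1 y m) - d1 (\<alpha> y) (d1 x m)"
   and d1dot: "\<And>x y m. d1 (dot x y) (\<alpha>1 m) = b1 (\<alpha> x) (d1 y m) - d1 (\<alpha> y) (b1 x m)"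
   and b1br: "\<And>x y m. b1 (br x y) (\<alpha>1 m) = b1 (\<alpha> x) (b1 y m) - b1 (\<alpha> y) (b1 x m)
                 - b1 (dot x y) (\<alpha>1 m) + b1 (dot y x) (\<alpha>1 m)"
    using m1 by auto
  have a2d: "\<And>x m. \<alpha>2 (d2 x m) = d2 (\<alpha> x) (\<alpha>2 m)" and a2b: "\<And>x m. \<alpha>2 (b2 x m) = b2 (\<alpha> x) (\<alpha>2 m)"
   and d2br: "\<And>x y m. d2 (br x y) (\<alpha>2 m) = d2 (\<alpha> x) (d2 y m) - d2 (\<alpha> y) (d2 x m)"
   and d2dot: "\<And>x y m. d2 (dot x y) (\<alpha>2 m) = b2 (\<alpha> x) (d2 y m) - d2 (\<alpha> y) (b2 x m)"
   and b2br: "\<And>x y m. b2 (br x y) (\<alpha>2 m) = b2 (\<alpha> x) (b2 y m) - b2 (\<alpha> y) (b2 x m)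
                 - b2 (dot x y) (\<alpha>2 m) + b2 (dot y x) (\<alpha>2 m)"
    using m2 by auto
  note S = \<alpha>M_def dM_def bM_def dM_add bM_add aM_add mbr mdot funpow_comm a1d a1b a2d a2b
     d1br d1dot b1br d2br d2dot b2br tp_add1 tp_diff1 tp_add2 tp_diff2
  have i1: "\<alpha>M (dM x m) = dM (\<alpha> x) (\<alpha>M m)" for x m
    by (rule ext_tp[OF T lin_comp[OF \<alpha>M_lin dl] lin_comp[OF dl \<alpha>M_lin]]) (simp add: S)
  have i2: "\<alpha>M (bM x m) = bM (\<alpha> x) (\<alpha>M m)" for x m
    by (rule ext_tp[OF T lin_comp[OF \<alpha>M_lin bl] lin_comp[OF bl \<alpha>M_lin]]) (simp add: S)
  have i3: "dM (br x y) (\<alpha>M m) = dM (\<alpha> x) (dM y m) - dM (\<alpha> y) (dM x m)" for x y m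
    by (rule ext_tp[OF T lin_comp[OF dl \<alpha>M_lin] lin_sub[OF lin_comp[OF dl dl] lin_comp[OF dl dl]]])
       (simp add: S algebra_simps)
  have i4: "dM (dot x y) (\<alpha>M m) = bM (\<alpha> x) (dM y m) - dM (\<alpha> y) (bM x m)" for x y m
    by (rule ext_tp[OF T lin_comp[OF dl \<alpha>M_lin] lin_sub[OF lin_comp[OF bl dl] lin_comp[OF dl bl]]])
       (simp add: S algebra_simps)
  have i5: "bM (br x y) (\<alpha>M m) = bM (\<alpha> x) (bM y m) - bM (\<alpha> y) (bM x m)
                 - bM (dot x y) (\<alpha>M m) + bM (dot y x) (\<alpha>M m)" for x y m
    by (rule ext_tp[OF T lin_comp[OF bl \<alpha>M_lin]
          lin_plus[OF lin_sub[OF lin_sub[OF lin_comp[OF bl bl] lin_comp[OF bl bl]] lin_comp[OF bl \<alpha>M_lin]] lin_comp[OF bl \<alpha>M_lin]]])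
       (simp add: S algebra_simps)
  show ?thesis unfolding hpl_module_def
    using vT \<alpha>M_lin dM_bilin bM_bilin i1 i2 i3 i4 i5 by blast
qed

end
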